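(* Let $\mathbb{X}$ be a finite-dimensional smooth real Banach space (of dimension at least $2$). Then there exist $x,y\in S_{\mathbb{X}}$ with $y\neq\pm x$ such that $(x,y)$ is a weak CPP.
   Context: $S_{\mathbb{X}}$ is the unit sphere; $B(x,r)=\{u:\|u-x\|<r\}$. $x\perp_B y$ means $\|x+\lambda y\|\ge\|x\|$ for all real $\lambda$; $x^\perp=\{y:x\perp_B y\}$. For $x,y\in S_{\mathbb{X}}$, $(x,y)$ is a weak CPP if there exist $z\in x^\perp\cap S_{\mathbb{X}}$, $w\in y^\perp\cap S_{\mathbb{X}}$, $r>0$, $\mu>0$ such that for all $a,b\in\mathbb{R}$, $ax+bz\in B(x,r)\cap S_{\mathbb{X}}$ implies $\|ay+b\mu w\|\le1$. *)

theory Defs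
  imports "HOL-Analysis.Analysis"
begin

definition birkhoff_orth :: "'a::real_normed_vector \<Rightarrow> 'a \<Rightarrow> bool" where
  "birkhoff_orth x y \<longleftrightarrow> (\<forall>t::real. norm (x + t *\<^sub>R y) \<ge> norm x)"

definition support_functional :: "'a::real_normed_vector \<Rightarrow> ('a \<Rightarrow> real) \<Rightarrow> bool" where
  "support_functional x f \<longleftrightarrow> linear f \<and> (\<forall>u. \<bar>f u\<bar> \<le> norm u) \<and> f x = 1"

definition smooth_space :: "'a::real_normed_vector itself \<Rightarrow> bool" where
  "smooth_space TYPE('a) \<longleftrightarrow>
     (\<forall>x::'a. norm x = 1 \<longrightarrow> (\<exists>!f. support_functional x f))"

definition weak_CPP :: "'a::real_normed_vector \<Rightarrow> 'a \<Rightarrow> bool" where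
  "weak_CPP x y \<longleftrightarrow>
     (\<exists>z w r \<mu>. birkhoff_orth x z \<and> norm z = 1 \<and> birkhoff_orth y w \<and> norm w = 1
        \<and> r > 0 \<and> \<mu> > 0 \<and>
        (\<forall>a b::real. (a *\<^sub>R x + b *\<^sub>R z \<in> ball x r \<and> norm (a *\<^sub>R x + b *\<^sub>R z) = 1)
            \<longrightarrow> norm (a *\<^sub>R y + b *\<^sub>R (\<mu> *\<^sub>R w)) \<le> 1))"

end

theory Submission imports Defs begin

lemma cube_compact: "compact (PiE UNIV (\<lambda>_::'a. {-1..1::real}))"
proof -
  have "compactin (product_topology (\<lambda>_::'a. euclidean) UNIV) (PiE UNIV (\<lambda>_::'a. {-1..1::real}))"
    by (simp add: compactin_PiE)
  then show ?thesis by (simp add: euclidean_product_topology)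
qed

lemma Phi_zero:
  fixes B :: "'a::real_normed_vector set"
  assumes "finite B" "independent B" "(\<Sum>b\<in>B. c b *\<^sub>R b) = 0"
  shows "\<forall>b\<in>B. c b = 0"
  using assms real_vector.dependent_finite[OF assms(1)] by auto

lemma Q_zero:
  assumes "finite B" "(\<Sum>b\<in>B. (c b)^2) = (0::real)"
  shows "\<forall>b\<in>B. c b = 0"
  using assms by (simp add: sum_nonneg_eq_0_iff)

lemma norm_bounds:
  fixes B :: "'a::real_normed_vector set"
  assumes fin: "finite B" and ind: "independent B" and ne: "B \<noteq> {}"
  shows "\<exists>m M c1 c2. 0 < m \<and> (\<Sum>b\<in>B. (c1 b)^2) = 1 \<and> (\<Sum>b\<in>B. (c2 b)^2) = 1
     \<and> norm (\<Sum>b\<in>B. c1 b *\<^sub>R b) = m \<and> norm (\<Sum>b\<in>B. c2 b *\<^sub>R b) = M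
     \<and> (\<forall>c. m * sqrt (\<Sum>b\<in>B. (c b)^2) \<le> norm (\<Sum>b\<in>B. c b *\<^sub>R b)
            \<and> norm (\<Sum>b\<in>B. c b *\<^sub>R b) \<le> M * sqrt (\<Sum>b\<in>B. (c b)^2))"
proof -
  define Q where "Q = (\<lambda>c::'a\<Rightarrow>real. (\<Sum>b\<in>B. (c b)^2))"
  define N where "N = (\<lambda>c::'a\<Rightarrow>real. norm (\<Sum>b\<in>B. c b *\<^sub>R b))"
  define S where "S = PiE UNIV (\<lambda>_::'a. {-1..1::real}) \<inter> {c. Q c = 1}"
  have cQ: "continuous_on UNIV Q" unfolding Q_def
    by (intro continuous_intros continuous_on_product_coordinates)
  have cN: "continuous_on UNIV N" unfolding N_def
    by (intro continuous_intros continuous_on_product_coordinates)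
  have "closed {c. Q c = 1}"
    using cQ by (intro closed_Collect_eq) (auto intro: continuous_intros)
  then have cS: "compact S" unfolding S_def using cube_compact compact_Int_closed by blast
  obtain b0 where b0: "b0 \<in> B" using ne by auto
  define c0 where "c0 = (\<lambda>b::'a. if b = b0 then 1 else (0::real))"
  have "Q c0 = 1" unfolding Q_def c0_def using fin b0
    by (simp add: if_distrib[of "\<lambda>x. x^2"] cong: if_cong)
  moreover have "c0 \<in> PiE UNIV (\<lambda>_::'a. {-1..1::real})" by (auto simp: c0_def)
  ultimately have neS: "S \<noteq> {}" unfolding S_def by auto
  obtain c1 where c1: "c1 \<in> S" "\<And>c. c \<in> S \<Longrightarrow> N c1 \<le> N c"
    using continuous_attains_inf[OF cS neS continuous_on_subset[OF cN]] by auto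
  obtain c2 where c2: "c2 \<in> S" "\<And>c. c \<in> S \<Longrightarrow> N c \<le> N c2"
    using continuous_attains_sup[OF cS neS continuous_on_subset[OF cN]] by auto
  have Qc1: "Q c1 = 1" and Qc2: "Q c2 = 1" using c1 c2 by (auto simp: S_def)
  have "N c1 \<noteq> 0"
  proof
    assume "N c1 = 0"
    then have "\<forall>b\<in>B. c1 b = 0" using Phi_zero[OF fin ind] by (simp add: N_def)
    then have "Q c1 = 0" by (simp add: Q_def)
    then show False using Qc1 by simp
  qed
  then have mpos: "0 < N c1" by (simp add: N_def)
  have bnd: "N c1 * sqrt (Q c) \<le> N c \<and> N c \<le> N c2 * sqrt (Q c)" for c
  proof (cases "Q c = 0")
    case True
    then have "\<forall>b\<in>B. c b = 0" using Q_zero[OF fin] by (simp add: Q_def)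
    then have "N c = 0" by (simp add: N_def)
    then show ?thesis using True by simp
  next
    case False
    have Qnn: "Q c \<ge> 0" unfolding Q_def by (intro sum_nonneg) auto
    define q where "q = sqrt (Q c)"
    have qpos: "q > 0" using False Qnn by (simp add: q_def)
    define c' where "c' = (\<lambda>b. if b \<in> B then c b / q else 0)"
    have le: "(c b)^2 \<le> Q c" if "b \<in> B" for b
      unfolding Q_def using fin that by (intro member_le_sum) auto
    have "\<bar>c b\<bar> \<le> q" if "b \<in> B" for b
    proof -
      have "sqrt ((c b)^2) \<le> sqrt (Q c)" using le[OF that] by (rule real_sqrt_le_mono)
      then show ?thesis by (simp add: q_def)
    qed
    then have "c' \<in> PiE UNIV (\<lambda>_::'a. {-1..1::real})" using qpos
      by (auto simp: c'_def abs_le_iff divide_le_eq le_divide_eq) (smt (verit))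
    moreover have "Q c' = Q c / q^2" unfolding Q_def c'_def
      by (simp add: power_divide sum_divide_distrib)
    moreover have "q^2 = Q c" using Qnn by (simp add: q_def)
    ultimately have "c' \<in> S" unfolding S_def using False by auto
    moreover have "N c' = N c / q"
    proof -
      have "(\<Sum>b\<in>B. c' b *\<^sub>R b) = (1/q) *\<^sub>R (\<Sum>b\<in>B. c b *\<^sub>R b)"
        by (simp add: c'_def scaleR_sum_right)
      then show ?thesis using qpos by (simp add: N_def)
    qed
    ultimately have "N c1 \<le> N c / q" "N c / q \<le> N c2" using c1 c2 by metis+
    then show ?thesis using qpos by (simp add: q_def[symmetric] field_simps)
  qed
  show ?thesis
    apply (rule exI[of _ "N c1"], rule exI[of _ "N c2"], rule exI[of _ c1], rule exI[of _ c2])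
    using mpos Qc1 Qc2 bnd by (simp add: N_def Q_def)
qed


lemma Phi_comb:
  fixes B :: "'a::real_normed_vector set"
  shows "\<alpha> *\<^sub>R (\<Sum>b\<in>B. c b *\<^sub>R b) + \<beta> *\<^sub>R (\<Sum>b\<in>B. d b *\<^sub>R b)
       = (\<Sum>b\<in>B. (\<alpha> * c b + \<beta> * d b) *\<^sub>R b)"
  by (simp add: scaleR_sum_right sum.distrib[symmetric] scaleR_add_left)

lemma Q_comb:
  fixes c d :: "'a \<Rightarrow> real"
  shows "(\<Sum>b\<in>B. (\<alpha> * c b + \<beta> * d b)^2) = \<alpha>^2 * (\<Sum>b\<in>B. (c b)^2) + \<beta>^2 * (\<Sum>b\<in>B. (d b)^2)
     + 2*\<alpha>*\<beta>*(\<Sum>b\<in>B. c b * d b)"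
proof -
  have e: "(\<alpha> * c b + \<beta> * d b)^2 = \<alpha>^2 * (c b)^2 + \<beta>^2 * (d b)^2 + 2*\<alpha>*\<beta>*(c b * d b)" for b
    by (simp add: power2_eq_square algebra_simps)
  show ?thesis by (simp add: e sum.distrib sum_distrib_left)
qed

lemma sum_two:
  assumes "finite B" "b1 \<in> B" "b2 \<in> B" "b1 \<noteq> b2" "\<And>b. b \<notin> {b1, b2} \<Longrightarrow> f b = 0"
  shows "(\<Sum>b\<in>B. f b) = f b1 + f (b2::'a) "
proof -
  have "(\<Sum>b\<in>B. f b) = (\<Sum>b\<in>{b1,b2}. f b)"
    using assms by (intro sum.mono_neutral_right) auto
  then show ?thesis using assms by simp
qed

lemma orth_exists:
  fixes B :: "'a set" and c :: "'a \<Rightarrow> real"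
  assumes fin: "finite B" "b1 \<in> B" "b2 \<in> B" "b1 \<noteq> b2"
  shows "\<exists>d. (\<Sum>b\<in>B. (d b)^2) = 1 \<and> (\<Sum>b\<in>B. c b * d b) = 0"
proof (cases "c b1 = 0 \<and> c b2 = 0")
  case True
  define d where "d = (\<lambda>b. if b = b1 then 1 else (0::real))"
  have "(\<Sum>b\<in>B. (d b)^2) = (d b1)^2 + (d b2)^2"
    using assms by (intro sum_two) (auto simp: d_def)
  moreover have "(\<Sum>b\<in>B. c b * d b) = c b1 * d b1 + c b2 * d b2"
    using assms by (intro sum_two) (auto simp: d_def)
  ultimately show ?thesis using True assms by (intro exI[of _ d]) (simp add: d_def)
next
  case False
  define d0 where "d0 = (\<lambda>b. if b = b1 then - c b2 else if b = b2 then c b1 else (0::real))"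
  define k where "k = sqrt ((c b1)^2 + (c b2)^2)"
  have kpos: "k > 0" using False unfolding k_def
    by (auto intro: add_pos_nonneg add_nonneg_pos)
  define d where "d = (\<lambda>b. d0 b / k)"
  have "(\<Sum>b\<in>B. (d b)^2) = (d b1)^2 + (d b2)^2"
    using assms by (intro sum_two) (auto simp: d_def d0_def)
  also have "\<dots> = ((c b1)^2 + (c b2)^2) / k^2"
    using assms by (simp add: d_def d0_def power_divide add_divide_distrib)
  also have "\<dots> = 1"
  proof -
    have "k^2 = (c b1)^2 + (c b2)^2" unfolding k_def by simp
    then show ?thesis using kpos by (metis div_self less_irrefl power_not_zero)
  qed
  finally have 1: "(\<Sum>b\<in>B. (d b)^2) = 1" .
  have "(\<Sum>b\<in>B. c b * d b) = c b1 * d b1 + c b2 * d b2"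
    using assms by (intro sum_two) (auto simp: d_def d0_def)
  also have "\<dots> = 0" using assms by (simp add: d_def d0_def field_simps)
  finally show ?thesis using 1 by blast
qed


lemma sqrt_scale:
  fixes K a v :: real
  assumes "K > 0"
  shows "K * sqrt ((a/K)^2 + v^2) = sqrt (a^2 + (K * v)^2)"
proof -
  have "K * sqrt ((a/K)^2 + v^2) = sqrt (K^2 * ((a/K)^2 + v^2))"
    using assms by (simp add: real_sqrt_mult)
  also have "K^2 * ((a/K)^2 + v^2) = a^2 + (K * v)^2"
    using assms by (simp add: field_simps power2_eq_square)
  finally show ?thesis .
qed

lemma sq_contra:
  fixes k :: real
  assumes "1 + (k/2) * k \<le> sqrt (1 + (k/2)^2)"
  shows "k = 0"
proof -
  have nn: "0 \<le> 1 + (k/2) * k" by (simp add: power2_eq_square[symmetric] add_nonneg_nonneg)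
  have "(1 + (k/2) * k)^2 \<le> (sqrt (1 + (k/2)^2))^2"
    using assms nn by (intro power_mono) auto
  then have "(1 + (k/2) * k)^2 \<le> 1 + (k/2)^2" by simp
  then have "k^2 + k^4/4 \<le> k^2/4" by (simp add: power2_eq_square algebra_simps power4_eq_xxxx)
  moreover have "k^4 \<ge> 0" by simp
  moreover have "k^2 \<ge> 0" by simp
  ultimately have "k^2 \<le> 0" by linarith
  then show ?thesis by simp
qed

theorem mainTheorem3:
  assumes findim: "\<exists>B::'a::banach set. finite B \<and> span B = UNIV"
    and dim2: "dim (UNIV::'a set) \<ge> 2"
    and smooth: "smooth_space TYPE('a)"
  shows "\<exists>x y::'a. norm x = 1 \<and> norm y = 1 \<and> y \<noteq> x \<and> y \<noteq> - x \<and> weak_CPP x y"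
proof -
  obtain B0 :: "'a set" where B0: "finite B0" "span B0 = UNIV" using findim by blast
  obtain B where B: "B \<subseteq> B0" "independent B" "B0 \<subseteq> span B"
    by (rule maximal_independent_subset)
  have finB: "finite B" using B0 B finite_subset by blast
  have "span B0 \<subseteq> span B" using B(3) by (simp add: span_minimal)
  then have spB: "span B = UNIV" using B0 by auto
  have cardB: "card B \<ge> 2" using dim2 dim_span_eq_card_independent[OF B(2)] spB by simp
  then have "B \<noteq> {}" by auto
  then obtain b1 where b1: "b1 \<in> B" by auto
  have "card (B - {b1}) \<ge> 1" using cardB b1 finB by (simp add: card_Diff_singleton)
  then have "B - {b1} \<noteq> {}" by (metis card.empty not_one_le_zero)
  then obtain b2 where b2: "b2 \<in> B" "b2 \<noteq> b1" by auto
  define P where "P = (\<lambda>c::'a\<Rightarrow>real. \<Sum>b\<in>B. c b *\<^sub>R b)"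
  define Q where "Q = (\<lambda>c::'a\<Rightarrow>real. \<Sum>b\<in>B. (c b)^2)"
  define IP where "IP = (\<lambda>c d::'a\<Rightarrow>real. \<Sum>b\<in>B. c b * d b)"
  obtain m M c1 c2' where mM: "0 < m" "Q c1 = 1" "Q c2' = 1" "norm (P c1) = m" "norm (P c2') = M"
     and bnd: "\<And>c. m * sqrt (Q c) \<le> norm (P c) \<and> norm (P c) \<le> M * sqrt (Q c)"
    using norm_bounds[OF finB B(2) \<open>B \<noteq> {}\<close>] unfolding P_def Q_def by blast
  have orth: "\<exists>d. Q d = 1 \<and> IP c d = 0" for c
    using orth_exists[OF finB b1 b2(1) b2(2)[symmetric], of c] unfolding Q_def IP_def by blast
  have comb: "m * sqrt (\<alpha>^2 + \<beta>^2) \<le> norm (\<alpha> *\<^sub>R P c + \<beta> *\<^sub>R P d)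
      \<and> norm (\<alpha> *\<^sub>R P c + \<beta> *\<^sub>R P d) \<le> M * sqrt (\<alpha>^2 + \<beta>^2)"
    if "Q c = 1" "Q d = 1" "IP c d = 0" for \<alpha> \<beta> c d
  proof -
    have "\<alpha> *\<^sub>R P c + \<beta> *\<^sub>R P d = P (\<lambda>b. \<alpha> * c b + \<beta> * d b)"
      unfolding P_def by (rule Phi_comb)
    moreover have "Q (\<lambda>b. \<alpha> * c b + \<beta> * d b) = \<alpha>^2 + \<beta>^2"
      using that unfolding Q_def IP_def by (simp add: Q_comb)
    ultimately show ?thesis using bnd[of "\<lambda>b. \<alpha> * c b + \<beta> * d b"] by simp
  qed
  have mleM: "m \<le> M" using bnd[of c1] mM by simp
  obtain c2 where c2: "Q c2 = 1" "norm (P c2) = M" "m < M \<or> IP c1 c2 = 0"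
  proof (cases "m < M")
    case True
    then show ?thesis using that mM by blast
  next
    case False
    then have "m = M" using mleM by simp
    obtain d where d: "Q d = 1" "IP c1 d = 0" using orth by blast
    have "norm (P d) = M" using bnd[of d] d \<open>m = M\<close> by simp
    then show ?thesis using that d by blast
  qed
  have Mpos: "M > 0" using mM mleM by simp
  obtain d1 where d1: "Q d1 = 1" "IP c1 d1 = 0" using orth by blast
  obtain d2 where d2: "Q d2 = 1" "IP c2 d2 = 0" using orth by blast
  define n1 where "n1 = norm (P d1)"
  define n2 where "n2 = norm (P d2)"
  have n1pos: "n1 > 0" using bnd[of d1] d1 mM unfolding n1_def by force
  have n2pos: "n2 > 0" using bnd[of d2] d2 mM unfolding n2_def by force
  define x where "x = (1/m) *\<^sub>R P c1"
  define y where "y = (1/M) *\<^sub>R P c2"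
  define z where "z = (1/n1) *\<^sub>R P d1"
  define w where "w = (1/n2) *\<^sub>R P d2"
  define \<mu> where "\<mu> = m * n2 / (M * n1)"
  have nx: "norm x = 1" using mM by (simp add: x_def)
  have ny: "norm y = 1" using c2 Mpos by (simp add: y_def)
  have nz: "norm z = 1" using n1pos by (simp add: z_def n1_def)
  have nw: "norm w = 1" using n2pos by (simp add: w_def n2_def)
  have mupos: "\<mu> > 0" using mM Mpos n1pos n2pos by (simp add: \<mu>_def)
  have xz: "birkhoff_orth x z"
    unfolding birkhoff_orth_def
  proof
    fix t :: real
    have e: "x + t *\<^sub>R z = (1/m) *\<^sub>R P c1 + (t/n1) *\<^sub>R P d1" by (simp add: x_def z_def)
    have "m * sqrt ((1/m)^2 + (t/n1)^2) \<le> norm (x + t *\<^sub>R z)"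
      using comb[OF mM(2) d1] e by simp
    moreover have "m * sqrt ((1/m)^2) \<le> m * sqrt ((1/m)^2 + (t/n1)^2)"
      using mM by (intro mult_left_mono real_sqrt_le_mono) auto
    moreover have "m * sqrt ((1/m)^2) = 1" using mM by simp
    ultimately show "norm x \<le> norm (x + t *\<^sub>R z)" using nx by linarith
  qed
  obtain f where f: "support_functional y f"
    using smooth ny unfolding smooth_space_def by blast
  have flin: "linear f" and fb: "\<And>u. \<bar>f u\<bar> \<le> norm u" and fy: "f y = 1"
    using f by (auto simp: support_functional_def)
  have fPc2: "f (P c2) = M"
  proof -
    have "P c2 = M *\<^sub>R y" using Mpos by (simp add: y_def)
    then show ?thesis using fy by (simp add: linear_scale[OF flin])
  qed
  have fd2: "f (P d2) = 0"
  proof -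
    define k where "k = f (P d2) / M"
    have "M + t * f (P d2) \<le> M * sqrt (1 + t^2)" for t
    proof -
      have "f (1 *\<^sub>R P c2 + t *\<^sub>R P d2) = M + t * f (P d2)"
        using fPc2 by (simp add: linear_add[OF flin] linear_scale[OF flin])
      moreover have "f (1 *\<^sub>R P c2 + t *\<^sub>R P d2) \<le> norm (1 *\<^sub>R P c2 + t *\<^sub>R P d2)"
        using fb abs_le_D1 by blast
      moreover have "norm (1 *\<^sub>R P c2 + t *\<^sub>R P d2) \<le> M * sqrt (1^2 + t^2)"
        using comb[OF c2(1) d2] by blast
      ultimately show ?thesis by simp
    qed
    from this[of "k/2"] have "M * (1 + (k/2) * k) \<le> M * sqrt (1 + (k/2)^2)"
      using Mpos by (simp add: k_def algebra_simps)
    then have "1 + (k/2) * k \<le> sqrt (1 + (k/2)^2)" using Mpos by simp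
    then have "k = 0" by (rule sq_contra)
    then show ?thesis using Mpos by (simp add: k_def)
  qed
  have yw: "birkhoff_orth y w"
    unfolding birkhoff_orth_def
  proof
    fix t :: real
    have "f (y + t *\<^sub>R w) = 1"
      using fy fd2 by (simp add: w_def linear_add[OF flin] linear_scale[OF flin])
    then show "norm y \<le> norm (y + t *\<^sub>R w)" using fb[of "y + t *\<^sub>R w"] ny by simp
  qed
  have cpp: "weak_CPP x y"
    unfolding weak_CPP_def
  proof (intro exI conjI allI impI)
    show "birkhoff_orth x z" "norm z = 1" "birkhoff_orth y w" "norm w = 1" "(1::real) > 0" "\<mu> > 0"
      using xz nz yw nw mupos by auto
    fix a b :: real
    assume ab: "a *\<^sub>R x + b *\<^sub>R z \<in> ball x 1 \<and> norm (a *\<^sub>R x + b *\<^sub>R z) = 1"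
    have e1: "a *\<^sub>R x + b *\<^sub>R z = (a/m) *\<^sub>R P c1 + (b/n1) *\<^sub>R P d1" by (simp add: x_def z_def)
    have e2: "a *\<^sub>R y + b *\<^sub>R (\<mu> *\<^sub>R w) = (a/M) *\<^sub>R P c2 + (b*\<mu>/n2) *\<^sub>R P d2"
      by (simp add: y_def w_def)
    have "m * sqrt ((a/m)^2 + (b/n1)^2) \<le> 1" using comb[OF mM(2) d1, of "a/m" "b/n1"] e1 ab by simp
    then have L: "sqrt (a^2 + (m*(b/n1))^2) \<le> 1" using sqrt_scale[OF mM(1)] by simp
    have "norm (a *\<^sub>R y + b *\<^sub>R (\<mu> *\<^sub>R w)) \<le> M * sqrt ((a/M)^2 + (b*\<mu>/n2)^2)"
      using comb[OF c2(1) d2] e2 by simp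
    also have "\<dots> = sqrt (a^2 + (M*(b*\<mu>/n2))^2)" by (rule sqrt_scale[OF Mpos])
    also have "M*(b*\<mu>/n2) = m*(b/n1)" using Mpos n2pos by (simp add: \<mu>_def field_simps)
    finally show "norm (a *\<^sub>R y + b *\<^sub>R (\<mu> *\<^sub>R w)) \<le> 1" using L by (metis order.trans)
  qed
  have neq: "y \<noteq> s *\<^sub>R x" if s: "s = 1 \<or> s = -1" for s
  proof
    assume h: "y = s *\<^sub>R x"
    define e where "e = (\<lambda>b. c1 b - (s*m/M) * c2 b)"
    have "P e = (1::real) *\<^sub>R P c1 + (-(s*m/M)) *\<^sub>R P c2"
      unfolding e_def P_def by (subst Phi_comb) simp
    also have "\<dots> = 0"
    proof -
      have "P c2 = M *\<^sub>R y" using Mpos by (simp add: y_def)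
      also have "\<dots> = (M * s / m) *\<^sub>R P c1" using h by (simp add: x_def)
      finally show ?thesis using mM Mpos s by (auto simp: field_simps)
    qed
    finally have "\<forall>b\<in>B. e b = 0" using Phi_zero[OF finB B(2)] unfolding P_def by blast
    then have ce: "\<forall>b\<in>B. c1 b = (s*m/M) * c2 b" by (simp add: e_def)
    have ss: "s^2 = 1" using s by auto
    have "Q c1 = (\<Sum>b\<in>B. (s*m/M)^2 * (c2 b)^2)" unfolding Q_def using ce
      by (intro sum.cong) (auto simp: power2_eq_square)
    then have "Q c1 = (s*m/M)^2 * Q c2" by (simp add: Q_def sum_distrib_left)
    then have "(m/M)^2 = 1" using mM c2 ss by (simp add: power_mult_distrib power_divide)
    then have "m = M" using mM Mpos by (simp add: power_divide)
    then have "IP c1 c2 = 0" using c2 by simp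
    moreover have "IP c1 c2 = s * Q c2" unfolding IP_def Q_def using ce \<open>m = M\<close> Mpos
      by (simp add: sum_distrib_left power2_eq_square mult.assoc)
    ultimately show False using c2 s by auto
  qed
  show ?thesis
    using nx ny cpp neq[of 1] neq[of "-1"] by (intro exI[of _ x] exI[of _ y]) auto
qed

end
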